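(* Let $G=(U\sqcup V,E)$ be a bipartite graph with integer weights $w:E\to\mathbb{Z}$ that has a perfect matching, let $P=(\pi,p)$ be an optimal solution of the dual assignment program $\max \sum_{u\in U}\pi(u)+\sum_{v\in V}p(v)$ subject to $\pi(u)+p(v)\le w(uv)$ for all $uv\in E$, and let $E_p\subseteq E$. Let $G_{cs}(P)$ be the spanning subgraph of $G$ with edge set $E_{cs}(P)=\{uv\in E:\pi(u)+p(v)=w(uv)\}$, and define $w_p:E_{cs}(P)\to\{0,1\}$ by $w_p(e)=0$ if $e\in E_p$ and $w_p(e)=1$ if $e\notin E_p$. If $M$ is a minimum weight perfect matching of $\{G_{cs}(P),w_p\}$, then $M$ is a minimum weight perfect matching of $\{G,w\}$ and $|M\cap E_p|\ge|M'\cap E_p|$ for every minimum weight perfect matching $M'$ of $\{G,w\}$.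
   Context: A matching is a set of pairwise vertex-disjoint edges; it is perfect if it covers all vertices. For a weight function $c$ on the edges of a graph $H$, the weight of a matching $M$ is $\sum_{e\in M}c(e)$, and a minimum weight perfect matching of $\{H,c\}$ is a perfect matching of $H$ of minimum weight. The dual assignment program is the linear-programming dual of the assignment linear program $\min\sum_{uv}x(uv)w(uv)$ subject to each vertex having total incident $x$-value $1$ and $x\ge0$. *)

theory Defs
  imports Complex_Main
begin

definition bipartite_graph :: "'a set \<Rightarrow> 'a set \<Rightarrow> ('a \<times> 'a) set \<Rightarrow> bool" where
  "bipartite_graph U V E \<longleftrightarrow> finite U \<and> finite V \<and> U \<inter> V = {} \<and> E \<subseteq> U \<times> V"

definition matching :: "('a \<times> 'a) set \<Rightarrow> ('a \<times> 'a) set \<Rightarrow> bool" where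
  "matching F M \<longleftrightarrow> M \<subseteq> F \<and>
     (\<forall>e\<in>M. \<forall>e'\<in>M. e \<noteq> e' \<longrightarrow> fst e \<noteq> fst e' \<and> snd e \<noteq> snd e')"

definition perfect_matching :: "'a set \<Rightarrow> 'a set \<Rightarrow> ('a \<times> 'a) set \<Rightarrow> ('a \<times> 'a) set \<Rightarrow> bool" where
  "perfect_matching U V F M \<longleftrightarrow> matching F M \<and>
     (\<forall>u\<in>U. \<exists>e\<in>M. fst e = u) \<and> (\<forall>v\<in>V. \<exists>e\<in>M. snd e = v)"

definition matching_weight :: "('a \<times> 'a \<Rightarrow> int) \<Rightarrow> ('a \<times> 'a) set \<Rightarrow> int" where
  "matching_weight c M = (\<Sum>e\<in>M. c e)"

definition min_weight_perfect_matching ::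
  "'a set \<Rightarrow> 'a set \<Rightarrow> ('a \<times> 'a) set \<Rightarrow> ('a \<times> 'a \<Rightarrow> int) \<Rightarrow> ('a \<times> 'a) set \<Rightarrow> bool" where
  "min_weight_perfect_matching U V F c M \<longleftrightarrow> perfect_matching U V F M \<and>
     (\<forall>M'. perfect_matching U V F M' \<longrightarrow> matching_weight c M \<le> matching_weight c M')"

definition dual_feasible ::
  "('a \<times> 'a) set \<Rightarrow> ('a \<times> 'a \<Rightarrow> int) \<Rightarrow> ('a \<Rightarrow> real) \<Rightarrow> ('a \<Rightarrow> real) \<Rightarrow> bool" where
  "dual_feasible E w \<pi> p \<longleftrightarrow> (\<forall>(u, v)\<in>E. \<pi> u + p v \<le> real_of_int (w (u, v)))"

definition dual_objective :: "'a set \<Rightarrow> 'a set \<Rightarrow> ('a \<Rightarrow> real) \<Rightarrow> ('a \<Rightarrow> real) \<Rightarrow> real" where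
  "dual_objective U V \<pi> p = (\<Sum>u\<in>U. \<pi> u) + (\<Sum>v\<in>V. p v)"

definition dual_optimal ::
  "'a set \<Rightarrow> 'a set \<Rightarrow> ('a \<times> 'a) set \<Rightarrow> ('a \<times> 'a \<Rightarrow> int) \<Rightarrow> ('a \<Rightarrow> real) \<Rightarrow> ('a \<Rightarrow> real) \<Rightarrow> bool" where
  "dual_optimal U V E w \<pi> p \<longleftrightarrow> dual_feasible E w \<pi> p \<and>
     (\<forall>\<pi>' p'. dual_feasible E w \<pi>' p' \<longrightarrow> dual_objective U V \<pi>' p' \<le> dual_objective U V \<pi> p)"

definition cs_edges ::
  "('a \<times> 'a) set \<Rightarrow> ('a \<times> 'a \<Rightarrow> int) \<Rightarrow> ('a \<Rightarrow> real) \<Rightarrow> ('a \<Rightarrow> real) \<Rightarrow> ('a \<times> 'a) set" where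
  "cs_edges E w \<pi> p = {(u, v) \<in> E. \<pi> u + p v = real_of_int (w (u, v))}"

definition pref_weight :: "('a \<times> 'a) set \<Rightarrow> 'a \<times> 'a \<Rightarrow> int" where
  "pref_weight Ep e = (if e \<in> Ep then 0 else 1)"

end

theory Submission
  imports Defs
begin

lemma pm_bij:
  assumes "bipartite_graph U V E" "F \<subseteq> E" "perfect_matching U V F M"
  shows "bij_betw fst M U" "bij_betw snd M V" "finite M" "M \<subseteq> E"
proof -
  have ME: "M \<subseteq> E" using assms unfolding perfect_matching_def matching_def by auto
  have sub: "M \<subseteq> U \<times> V" using ME assms(1) unfolding bipartite_graph_def by auto
  have m: "\<forall>e\<in>M. \<forall>e'\<in>M. e \<noteq> e' \<longrightarrow> fst e \<noteq> fst e' \<and> snd e \<noteq> snd e'"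
    using assms(3) unfolding perfect_matching_def matching_def by auto
  have injf: "inj_on fst M" using m by (meson inj_onI)
  have injs: "inj_on snd M" using m by (meson inj_onI)
  have cov: "\<forall>u\<in>U. \<exists>e\<in>M. fst e = u" "\<forall>v\<in>V. \<exists>e\<in>M. snd e = v"
    using assms(3) unfolding perfect_matching_def by auto
  have imf: "fst ` M = U"
  proof
    show "fst ` M \<subseteq> U" using sub by auto
    show "U \<subseteq> fst ` M" using cov(1) by (force simp: image_iff)
  qed
  have ims: "snd ` M = V"
  proof
    show "snd ` M \<subseteq> V" using sub by auto
    show "V \<subseteq> snd ` M" using cov(2) by (force simp: image_iff)
  qed
  show "bij_betw fst M U" using injf imf by (simp add: bij_betw_def)
  show "bij_betw snd M V" using injs ims by (simp add: bij_betw_def)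
  have "finite U" using assms(1) unfolding bipartite_graph_def by auto
  then show "finite M" using finite_imageD[of fst M] injf imf by simp
  show "M \<subseteq> E" by (rule ME)
qed

lemma pm_sum:
  assumes "bipartite_graph U V E" "F \<subseteq> E" "perfect_matching U V F M"
  shows "(\<Sum>e\<in>M. \<pi> (fst e) + p (snd e)) = dual_objective U V \<pi> p"
proof -
  have a: "(\<Sum>e\<in>M. \<pi> (fst e)) = (\<Sum>u\<in>U. \<pi> u)"
    using pm_bij(1)[OF assms] by (metis sum.reindex_bij_betw)
  have b: "(\<Sum>e\<in>M. p (snd e)) = (\<Sum>v\<in>V. p v)"
    using pm_bij(2)[OF assms] by (metis sum.reindex_bij_betw)
  show ?thesis using a b by (simp add: sum.distrib dual_objective_def)
qed

lemma pref_sum: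
  assumes "finite M"
  shows "matching_weight (pref_weight Ep) M = int (card M) - int (card (M \<inter> Ep))"
proof -
  have "matching_weight (pref_weight Ep) M = (\<Sum>e\<in>M. 1 - (if e \<in> Ep then 1 else 0))"
    unfolding matching_weight_def pref_weight_def by (rule sum.cong) auto
  also have "\<dots> = int (card M) - (\<Sum>e\<in>M. (if e \<in> Ep then 1 else 0))"
    by (simp add: sum_subtractf)
  also have "(\<Sum>e\<in>M. (if e \<in> Ep then 1 else 0::int)) = int (card (M \<inter> Ep))"
    using assms by (simp add: sum.If_cases)
  finally show ?thesis .
qed

theorem proposition3p9:
  fixes U V :: "'a set" and E Ep M :: "('a \<times> 'a) set" and w :: "'a \<times> 'a \<Rightarrow> int"
    and \<pi> p :: "'a \<Rightarrow> real"
  assumes "bipartite_graph U V E"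
    and "\<exists>M0. perfect_matching U V E M0"
    and "dual_optimal U V E w \<pi> p"
    and "Ep \<subseteq> E"
    and "min_weight_perfect_matching U V (cs_edges E w \<pi> p) (pref_weight Ep) M"
  shows "min_weight_perfect_matching U V E w M \<and>
    (\<forall>M'. min_weight_perfect_matching U V E w M' \<longrightarrow> card (M' \<inter> Ep) \<le> card (M \<inter> Ep))"
proof -
  let ?C = "cs_edges E w \<pi> p"
  have CE: "?C \<subseteq> E" unfolding cs_edges_def by auto
  have feas: "dual_feasible E w \<pi> p" using assms(3) unfolding dual_optimal_def by auto
  have pmC: "perfect_matching U V ?C M" using assms(5) unfolding min_weight_perfect_matching_def by auto
  have MC: "M \<subseteq> ?C" using pmC unfolding perfect_matching_def matching_def by auto
  have pmE: "perfect_matching U V E M" using pmC CE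
    unfolding perfect_matching_def matching_def by auto
  have wM: "real_of_int (matching_weight w M) = dual_objective U V \<pi> p"
  proof -
    have "real_of_int (matching_weight w M) = (\<Sum>e\<in>M. \<pi> (fst e) + p (snd e))"
      unfolding matching_weight_def of_int_sum
      by (rule sum.cong) (use MC in \<open>auto simp: cs_edges_def\<close>)
    then show ?thesis using pm_sum[OF assms(1) CE pmC] by simp
  qed
  have slack: "(\<Sum>e\<in>M'. real_of_int (w e) - (\<pi> (fst e) + p (snd e))) =
       real_of_int (matching_weight w M') - dual_objective U V \<pi> p"
    and nn: "\<forall>e\<in>M'. real_of_int (w e) - (\<pi> (fst e) + p (snd e)) \<ge> 0"
    if "perfect_matching U V E M'" for M'
  proof -
    show "(\<Sum>e\<in>M'. real_of_int (w e) - (\<pi> (fst e) + p (snd e))) =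
       real_of_int (matching_weight w M') - dual_objective U V \<pi> p"
      using pm_sum[OF assms(1) subset_refl that, of \<pi> p]
      by (simp add: sum_subtractf matching_weight_def)
    show "\<forall>e\<in>M'. real_of_int (w e) - (\<pi> (fst e) + p (snd e)) \<ge> 0"
    proof
      fix e assume "e \<in> M'"
      then have "e \<in> E" using pm_bij(4)[OF assms(1) subset_refl that] by auto
      then show "real_of_int (w e) - (\<pi> (fst e) + p (snd e)) \<ge> 0"
      proof (cases e)
        case (Pair a b)
        have "\<pi> a + p b \<le> real_of_int (w (a, b))"
          using feas \<open>e \<in> E\<close> Pair unfolding dual_feasible_def by blast
        then show ?thesis using Pair by simp
      qed
    qed
  qed
  have lower: "dual_objective U V \<pi> p \<le> real_of_int (matching_weight w M')"
    if "perfect_matching U V E M'" for M'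
    using slack[OF that] nn[OF that] sum_nonneg[of M' "\<lambda>e. real_of_int (w e) - (\<pi> (fst e) + p (snd e))"]
    by simp
  have minM: "min_weight_perfect_matching U V E w M"
    unfolding min_weight_perfect_matching_def
  proof (intro conjI allI impI)
    show "perfect_matching U V E M" by (rule pmE)
    fix M' assume "perfect_matching U V E M'"
    then have "real_of_int (matching_weight w M) \<le> real_of_int (matching_weight w M')"
      using lower wM by simp
    then show "matching_weight w M \<le> matching_weight w M'" by simp
  qed
  moreover have "card (M' \<inter> Ep) \<le> card (M \<inter> Ep)"
    if mw: "min_weight_perfect_matching U V E w M'" for M'
  proof -
    have pm': "perfect_matching U V E M'" using mw unfolding min_weight_perfect_matching_def by auto
    have fin': "finite M'" using pm_bij(3)[OF assms(1) subset_refl pm'] .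
    have "matching_weight w M' \<le> matching_weight w M" using mw pmE
      unfolding min_weight_perfect_matching_def by auto
    then have "real_of_int (matching_weight w M') \<le> dual_objective U V \<pi> p" using wM by linarith
    then have z: "(\<Sum>e\<in>M'. real_of_int (w e) - (\<pi> (fst e) + p (snd e))) = 0"
      using slack[OF pm'] lower[OF pm'] by linarith
    have tight: "\<forall>e\<in>M'. real_of_int (w e) - (\<pi> (fst e) + p (snd e)) = 0"
    proof -
      have "(\<Sum>e\<in>M'. real_of_int (w e) - (\<pi> (fst e) + p (snd e))) = 0 \<longleftrightarrow>
          (\<forall>e\<in>M'. real_of_int (w e) - (\<pi> (fst e) + p (snd e)) = 0)"
        by (rule sum_nonneg_eq_0_iff[OF fin']) (use nn[OF pm'] in auto)
      then show ?thesis using z by (rule iffD1)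
    qed
    have "M' \<subseteq> ?C"
    proof
      fix e assume "e \<in> M'"
      moreover have "e \<in> E" using pm_bij(4)[OF assms(1) subset_refl pm'] \<open>e \<in> M'\<close> by auto
      ultimately show "e \<in> ?C" using tight unfolding cs_edges_def
        by (cases e) auto
    qed
    then have pmC': "perfect_matching U V ?C M'" using pm'
      unfolding perfect_matching_def matching_def by auto
    have le: "matching_weight (pref_weight Ep) M \<le> matching_weight (pref_weight Ep) M'"
      using assms(5) pmC' unfolding min_weight_perfect_matching_def by auto
    have finM: "finite M" using pm_bij(3)[OF assms(1) CE pmC] .
    have "card M = card U" using pm_bij(1)[OF assms(1) CE pmC] bij_betw_same_card by blast
    moreover have "card M' = card U" using pm_bij(1)[OF assms(1) subset_refl pm'] bij_betw_same_card by blast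
    ultimately have "int (card M) = int (card M')" by simp
    then show ?thesis using le pref_sum[OF finM, of Ep] pref_sum[OF fin', of Ep] by linarith
  qed
  ultimately show ?thesis by blast
qed

end
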